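(* Let $(B,\mathfrak{m})$ be a deformation base, $X$ a vector space and $M\subseteq B\widehat{\otimes}X$ a pseudoclosed $B$-submodule. The following are equivalent: (i) $M$ is quasi-flat; (ii) $M$ is quasi-flat and closed in the $\mathfrak{m}$-adic topology; (iii) $M\cap\mathfrak{m}^kX\subseteq\mathfrak{m}^kM+\mathfrak{m}^{k+1}X$ for every $k\ge1$; (iv) $M\cap\mathfrak{m}^kX\subseteq\mathfrak{m}^kM$ for every $k\ge1$.
   Context: Deformation base: complete local Noetherian unital $\mathbb{C}$-algebra $B$ with maximal ideal $\mathfrak{m}$, $B/\mathfrak{m}=\mathbb{C}$. $B\widehat{\otimes}X=\varprojlim(B/\mathfrak{m}^k\otimes X)$ with its $\mathfrak{m}$-adic topology; $\mathfrak{m}^kX$ is the image of $\mathfrak{m}^k\widehat{\otimes}X$. For a subspace $Y\subseteq B\widehat{\otimes}X$: $BY=\{\sum_ib_iy_i:y_i\in Y,b_i\in\mathfrak{m}^{k_i},k_i\to\infty\}$, and $\mathfrak{m}^kY$ the same with all $k_i\ge k$. $M$ is pseudoclosed if $BM\subseteq M$, quasi-flat if $M\cap\mathfrak{m}X\subseteq\mathfrak{m}M$. *)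

theory Defs
  imports Complex_Main "HOL-Library.Function_Algebras"
begin

definition is_ideal :: "'b::comm_ring_1 set \<Rightarrow> bool" where
  "is_ideal I \<longleftrightarrow> 0 \<in> I \<and> (\<forall>x\<in>I. \<forall>y\<in>I. x + y \<in> I) \<and> (\<forall>r. \<forall>x\<in>I. r * x \<in> I)"

definition ideal_gen :: "'b::comm_ring_1 set \<Rightarrow> 'b set" where
  "ideal_gen S = {x. \<exists>r. x = (\<Sum>s\<in>S. r s * s)}"

definition noetherian_ring :: "'b::comm_ring_1 itself \<Rightarrow> bool" where
  "noetherian_ring _ \<longleftrightarrow>
     (\<forall>I::'b set. is_ideal I \<longrightarrow> (\<exists>S. finite S \<and> S \<subseteq> I \<and> I = ideal_gen S))"

primrec ideal_pow :: "'b::comm_ring_1 set \<Rightarrow> nat \<Rightarrow> 'b set" where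
  "ideal_pow m 0 = UNIV"
| "ideal_pow m (Suc k) =
     {x. \<exists>F::nat set. \<exists>a c. finite F \<and> (\<forall>j\<in>F. a j \<in> m \<and> c j \<in> ideal_pow m k)
            \<and> x = (\<Sum>j\<in>F. a j * c j)}"

text \<open>A deformation base: complete local Noetherian unital C-algebra B (the type 'b with
  structure map iota : C -> B, a unital ring homomorphism) with maximal ideal m and
  B/m = C (every b is congruent mod m to iota c for a unique c).
  m-adic completeness: separated, and every m-adic Cauchy sequence converges.\<close>
definition deformation_base :: "(complex \<Rightarrow> 'b::comm_ring_1) \<Rightarrow> 'b set \<Rightarrow> bool" where
  "deformation_base \<iota> m \<longleftrightarrow>
     (\<iota> 1 = 1 \<and> (\<forall>x y. \<iota> (x + y) = \<iota> x + \<iota> y) \<and> (\<forall>x y. \<iota> (x * y) = \<iota> x * \<iota> y))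
   \<and> noetherian_ring TYPE('b)
   \<and> is_ideal m \<and> m \<noteq> UNIV \<and> (\<forall>I. is_ideal I \<and> I \<noteq> UNIV \<longrightarrow> I \<subseteq> m)
   \<and> (\<forall>b. \<exists>!c. b - \<iota> c \<in> m)
   \<and> (\<Inter>k. ideal_pow m k) = {0}
   \<and> (\<forall>x::nat \<Rightarrow> 'b. (\<forall>k. \<exists>N. \<forall>n\<ge>N. \<forall>n'\<ge>N. x n - x n' \<in> ideal_pow m k)
          \<longrightarrow> (\<exists>l. \<forall>k. \<exists>N. \<forall>n\<ge>N. x n - l \<in> ideal_pow m k))"

text \<open>With X the vector space with basis indexed by 'i, B/m^k \<otimes> X is the space of finitely
  supported functions 'i => B/m^k, and the inverse limit is the set of functions
  f : 'i => B such that, for every k, f i \<in> m^k for all but finitely many i.\<close>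
definition ctensor :: "'b::comm_ring_1 set \<Rightarrow> ('i \<Rightarrow> 'b) set" where
  "ctensor m = {f. \<forall>k. finite {i. f i \<notin> ideal_pow m k}}"

text \<open>m^k X: image of m^k \<otimes> X in B \<otimes> X (coefficients in m^k).\<close>
definition mpowX :: "'b::comm_ring_1 set \<Rightarrow> nat \<Rightarrow> ('i \<Rightarrow> 'b) set" where
  "mpowX m k = {f \<in> ctensor m. \<forall>i. f i \<in> ideal_pow m k}"

definition smult_ct :: "'b::comm_ring_1 \<Rightarrow> ('i \<Rightarrow> 'b) \<Rightarrow> ('i \<Rightarrow> 'b)" where
  "smult_ct b f = (\<lambda>i. b * f i)"

definition mconv :: "'b::comm_ring_1 set \<Rightarrow> (nat \<Rightarrow> 'i \<Rightarrow> 'b) \<Rightarrow> ('i \<Rightarrow> 'b) \<Rightarrow> bool" where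
  "mconv m s l \<longleftrightarrow> (\<forall>k. \<exists>N. \<forall>n\<ge>N. s n - l \<in> mpowX m k)"

definition mpowY :: "'b::comm_ring_1 set \<Rightarrow> nat \<Rightarrow> ('i \<Rightarrow> 'b) set \<Rightarrow> ('i \<Rightarrow> 'b) set" where
  "mpowY m k Y = {s. \<exists>(b::nat \<Rightarrow> 'b) (y::nat \<Rightarrow> 'i \<Rightarrow> 'b) (\<kappa>::nat \<Rightarrow> nat).
      (\<forall>j. y j \<in> Y) \<and> (\<forall>j. \<kappa> j \<ge> k \<and> b j \<in> ideal_pow m (\<kappa> j))
      \<and> filterlim \<kappa> at_top sequentially
      \<and> mconv m (\<lambda>n. \<Sum>j<n. smult_ct (b j) (y j)) s}"

definition BY :: "'b::comm_ring_1 set \<Rightarrow> ('i \<Rightarrow> 'b) set \<Rightarrow> ('i \<Rightarrow> 'b) set" where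
  "BY m Y = mpowY m 0 Y"

definition B_submodule :: "'b::comm_ring_1 set \<Rightarrow> ('i \<Rightarrow> 'b) set \<Rightarrow> bool" where
  "B_submodule m M \<longleftrightarrow> M \<subseteq> ctensor m \<and> 0 \<in> M \<and> (\<forall>x\<in>M. \<forall>y\<in>M. x + y \<in> M)
     \<and> (\<forall>b. \<forall>x\<in>M. smult_ct b x \<in> M)"

definition pseudoclosed :: "'b::comm_ring_1 set \<Rightarrow> ('i \<Rightarrow> 'b) set \<Rightarrow> bool" where
  "pseudoclosed m M \<longleftrightarrow> BY m M \<subseteq> M"

definition quasi_flat :: "'b::comm_ring_1 set \<Rightarrow> ('i \<Rightarrow> 'b) set \<Rightarrow> bool" where
  "quasi_flat m M \<longleftrightarrow> M \<inter> mpowX m 1 \<subseteq> mpowY m 1 M"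

definition madic_closed :: "'b::comm_ring_1 set \<Rightarrow> ('i \<Rightarrow> 'b) set \<Rightarrow> bool" where
  "madic_closed m M \<longleftrightarrow>
     (\<forall>x\<in>ctensor m. (\<forall>k. \<exists>y\<in>M. x - y \<in> mpowX m k) \<longrightarrow> x \<in> M)"

end

theory Submission
  imports Defs "HOL-Library.Nat_Bijection"
begin


lemma ideal_pow_SucI: "finite (F::nat set) \<Longrightarrow> (\<forall>j\<in>F. a j \<in> m \<and> c j \<in> ideal_pow m k) \<Longrightarrow> x = (\<Sum>j\<in>F. a j * c j) \<Longrightarrow> x \<in> ideal_pow m (Suc k)"
  by (simp only: ideal_pow.simps mem_Collect_eq) blast
lemma ideal_pow_SucE: "x \<in> ideal_pow m (Suc k) \<Longrightarrow> (\<And>(F::nat set) a c. finite F \<Longrightarrow> (\<forall>j\<in>F. a j \<in> m \<and> c j \<in> ideal_pow m k) \<Longrightarrow> x = (\<Sum>j\<in>F. a j * c j) \<Longrightarrow> P) \<Longrightarrow> P"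
  by (simp only: ideal_pow.simps mem_Collect_eq) blast

lemma ip_zero: "0 \<in> ideal_pow m k"
proof (cases k)
  case 0 then show ?thesis by simp
next
  case (Suc n) then show ?thesis 
    by (auto intro!: ideal_pow_SucI[where F="{}"])
qed

lemma ip_add:
  assumes "x \<in> ideal_pow m k" "y \<in> ideal_pow m k"
  shows "x + y \<in> ideal_pow m k"
proof (cases k)
  case 0 then show ?thesis by simp
next
  case (Suc n)
  from assms(1) have "x \<in> ideal_pow m (Suc n)" using Suc by simp
  then obtain F1 :: "nat set" and a1 c1 where 1: "finite F1" "\<forall>j\<in>F1. a1 j \<in> m \<and> c1 j \<in> ideal_pow m n"
     "x = (\<Sum>j\<in>F1. a1 j * c1 j)" by (rule ideal_pow_SucE)
  from assms(2) have "y \<in> ideal_pow m (Suc n)" using Suc by simp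
  then obtain F2 :: "nat set" and a2 c2 where 2: "finite F2" "\<forall>j\<in>F2. a2 j \<in> m \<and> c2 j \<in> ideal_pow m n"
     "y = (\<Sum>j\<in>F2. a2 j * c2 j)" by (rule ideal_pow_SucE)
  define F where "F = (\<lambda>j. 2*j) ` F1 \<union> (\<lambda>j. 2*j+1) ` F2"
  define a where "a = (\<lambda>j::nat. if even j then a1 (j div 2) else a2 (j div 2))"
  define c where "c = (\<lambda>j::nat. if even j then c1 (j div 2) else c2 (j div 2))"
  have "(\<Sum>j\<in>F. a j * c j) = (\<Sum>j\<in>(\<lambda>j. 2*j) ` F1. a j * c j) + (\<Sum>j\<in>(\<lambda>j. 2*j+1) ` F2. a j * c j)"
    unfolding F_def proof (rule sum.union_disjoint)
    show "(\<lambda>j. 2*j) ` F1 \<inter> (\<lambda>j. 2*j+1) ` F2 = {}" by (auto, presburger)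
  qed (use 1 2 in auto)
  also have "(\<Sum>j\<in>(\<lambda>j. 2*j) ` F1. a j * c j) = (\<Sum>j\<in>F1. a1 j * c1 j)"
    by (subst sum.reindex) (simp_all add: inj_on_def a_def c_def)
  also have "(\<Sum>j\<in>(\<lambda>j. 2*j+1) ` F2. a j * c j) = (\<Sum>j\<in>F2. a2 j * c2 j)"
    by (subst sum.reindex) (simp_all add: inj_on_def a_def c_def)
  finally have "x + y = (\<Sum>j\<in>F. a j * c j)" using 1 2 by simp
  moreover have "finite F" "\<forall>j\<in>F. a j \<in> m \<and> c j \<in> ideal_pow m n"
    using 1 2 by (auto simp: F_def a_def c_def)
  ultimately show ?thesis unfolding Suc by (intro ideal_pow_SucI)
qed

lemma ip_mult:
  assumes "is_ideal m" "x \<in> ideal_pow m k"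
  shows "r * x \<in> ideal_pow m k"
proof (cases k)
  case 0 then show ?thesis by simp
next
  case (Suc n)
  from assms(2) have "x \<in> ideal_pow m (Suc n)" using Suc by simp
  then obtain F :: "nat set" and a c where 1: "finite F" "\<forall>j\<in>F. a j \<in> m \<and> c j \<in> ideal_pow m n"
     "x = (\<Sum>j\<in>F. a j * c j)" by (rule ideal_pow_SucE)
  have "r * x = (\<Sum>j\<in>F. (r * a j) * c j)" using 1 by (simp add: sum_distrib_left mult.assoc)
  moreover have "\<forall>j\<in>F. r * a j \<in> m \<and> c j \<in> ideal_pow m n" using 1 assms(1)
    unfolding is_ideal_def by blast
  ultimately show ?thesis unfolding Suc using 1 by (intro ideal_pow_SucI)
qed

lemma ip_mult2:
  assumes "is_ideal m" "x \<in> ideal_pow m k"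
  shows "x * r \<in> ideal_pow m k"
  using ip_mult[OF assms, of r] by (simp add: mult.commute)

lemma ip_neg: assumes "is_ideal m" "x \<in> ideal_pow m k" shows "- x \<in> ideal_pow m k"
  using ip_mult[OF assms, of "-1"] by simp

lemma ip_diff: assumes "is_ideal m" "x \<in> ideal_pow m k" "y \<in> ideal_pow m k"
  shows "x - y \<in> ideal_pow m k"
  using ip_add[OF assms(2) ip_neg[OF assms(1,3)]] by simp

lemma ip_sum: assumes "\<And>j. j \<in> F \<Longrightarrow> f j \<in> ideal_pow m k"
  shows "(\<Sum>j\<in>F. f j) \<in> ideal_pow m k"
  using assms by (induction F rule: infinite_finite_induct) (auto simp: ip_zero ip_add)

lemma ip_Suc_sub: "ideal_pow m (Suc k) \<subseteq> ideal_pow m k"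
proof (induction k)
  case 0 then show ?case by simp
next
  case (Suc k)
  show ?case
  proof
    fix x assume "x \<in> ideal_pow m (Suc (Suc k))"
    then obtain F :: "nat set" and a c where 1: "finite F" "\<forall>j\<in>F. a j \<in> m \<and> c j \<in> ideal_pow m (Suc k)"
     "x = (\<Sum>j\<in>F. a j * c j)" by (rule ideal_pow_SucE)
    then have "\<forall>j\<in>F. a j \<in> m \<and> c j \<in> ideal_pow m k" using Suc by blast
    then show "x \<in> ideal_pow m (Suc k)" using 1 by (intro ideal_pow_SucI)
  qed
qed

lemma ip_mono: "p \<le> q \<Longrightarrow> ideal_pow m q \<subseteq> ideal_pow m p"
proof (induction q)
  case 0 then show ?case by simp
next
  case (Suc q)
  show ?case
  proof (cases "p \<le> q")
    case True then show ?thesis using Suc.IH ip_Suc_sub[of m q] by blast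
  next
    case False then have "p = Suc q" using Suc.prems by simp
    then show ?thesis by simp
  qed
qed

lemma ip_prod:
  assumes "is_ideal m" "a \<in> ideal_pow m p" "c \<in> ideal_pow m q"
  shows "a * c \<in> ideal_pow m (p + q)"
  using assms(2)
proof (induction p arbitrary: a)
  case 0 then show ?case using ip_mult[OF assms(1) assms(3)] by simp
next
  case (Suc p)
  then obtain F :: "nat set" and a' c' where 1: "finite F" "\<forall>j\<in>F. a' j \<in> m \<and> c' j \<in> ideal_pow m p"
     "a = (\<Sum>j\<in>F. a' j * c' j)" by (elim ideal_pow_SucE)
  have "a * c = (\<Sum>j\<in>F. a' j * (c' j * c))" using 1 by (simp add: sum_distrib_right mult.assoc)
  moreover have "\<forall>j\<in>F. a' j \<in> m \<and> c' j * c \<in> ideal_pow m (p + q)" using 1 Suc by blast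
  ultimately show ?case using 1 unfolding add_Suc by (intro ideal_pow_SucI)
qed

lemma ip_one:
  assumes "is_ideal m" shows "ideal_pow m 1 = m"
proof
  show "ideal_pow m 1 \<subseteq> m"
  proof
    fix x assume "x \<in> ideal_pow m 1"
    then obtain F :: "nat set" and a c where 1: "finite F" "\<forall>j\<in>F. a j \<in> m"
     "x = (\<Sum>j\<in>F. a j * c j)" unfolding One_nat_def by (elim ideal_pow_SucE) blast
    have "(\<Sum>j\<in>F. a j * c j) \<in> m" using 1(1,2)
    proof (induction F rule: finite_induct)
      case empty then show ?case using assms by (simp add: is_ideal_def)
    next
      case (insert j F)
      then have "c j * a j \<in> m" using assms unfolding is_ideal_def by blast
      then show ?case using insert assms unfolding is_ideal_def by (simp add: mult.commute)
    qed
    then show "x \<in> m" using 1 by simp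
  qed
next
  show "m \<subseteq> ideal_pow m 1"
  proof
    fix x assume "x \<in> m"
    then show "x \<in> ideal_pow m 1" unfolding One_nat_def
      by (intro ideal_pow_SucI[where F="{0}" and a="\<lambda>_. x" and c="\<lambda>_. 1"]) auto
  qed
qed



declare ideal_pow.simps(2)[simp del]

lemma sum_fun_apply: "(\<Sum>j\<in>F. f j) x = (\<Sum>j\<in>F. f j x)"
  by (induction F rule: infinite_finite_induct) auto

lemma mX_iff: "f \<in> mpowX m k \<longleftrightarrow> f \<in> ctensor m \<and> (\<forall>i. f i \<in> ideal_pow m k)"
  by (simp add: mpowX_def)

lemma ct_iff: "f \<in> ctensor m \<longleftrightarrow> (\<forall>k. finite {i. f i \<notin> ideal_pow m k})"
  by (simp add: ctensor_def)

lemma ct_zero: "0 \<in> ctensor m"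
  by (simp add: ct_iff ip_zero)

lemma ct_add: assumes "f \<in> ctensor m" "g \<in> ctensor m" shows "f + g \<in> ctensor m"
  unfolding ct_iff
proof
  fix k
  have "{i. (f + g) i \<notin> ideal_pow m k} \<subseteq> {i. f i \<notin> ideal_pow m k} \<union> {i. g i \<notin> ideal_pow m k}"
    using ip_add by fastforce
  then show "finite {i. (f + g) i \<notin> ideal_pow m k}"
    using assms unfolding ct_iff by (meson finite_Un finite_subset)
qed

lemma ct_smult: assumes "is_ideal m" "f \<in> ctensor m" shows "smult_ct b f \<in> ctensor m"
  unfolding ct_iff
proof
  fix k
  have "{i. smult_ct b f i \<notin> ideal_pow m k} \<subseteq> {i. f i \<notin> ideal_pow m k}"
    using ip_mult[OF assms(1)] by (auto simp: smult_ct_def)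
  then show "finite {i. smult_ct b f i \<notin> ideal_pow m k}"
    using assms unfolding ct_iff by (meson finite_subset)
qed

lemma smult_neg1: "smult_ct (-1) f = - f"
  by (auto simp: smult_ct_def)

lemma ct_neg: assumes "is_ideal m" "f \<in> ctensor m" shows "- f \<in> ctensor m"
  using ct_smult[OF assms, of "-1"] by (simp add: smult_neg1)

lemma ct_diff: assumes "is_ideal m" "f \<in> ctensor m" "g \<in> ctensor m" shows "f - g \<in> ctensor m"
  using ct_add[OF assms(2) ct_neg[OF assms(1,3)]] by simp

lemma mX_zero: "0 \<in> mpowX m k"
  by (simp add: mX_iff ct_zero ip_zero)

lemma mX_add: "f \<in> mpowX m k \<Longrightarrow> g \<in> mpowX m k \<Longrightarrow> f + g \<in> mpowX m k"
  by (simp add: mX_iff ct_add ip_add)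

lemma mX_smult: "is_ideal m \<Longrightarrow> f \<in> mpowX m k \<Longrightarrow> smult_ct b f \<in> mpowX m k"
  by (simp add: mX_iff ct_smult ip_mult) (simp add: smult_ct_def ip_mult)

lemma mX_neg: "is_ideal m \<Longrightarrow> f \<in> mpowX m k \<Longrightarrow> - f \<in> mpowX m k"
  using mX_smult[of m f k "-1"] by (simp add: smult_neg1)

lemma mX_diff: "is_ideal m \<Longrightarrow> f \<in> mpowX m k \<Longrightarrow> g \<in> mpowX m k \<Longrightarrow> f - g \<in> mpowX m k"
  using mX_add[of f m k "- g"] mX_neg[of m g k] by simp

lemma mX_sum: "(\<And>j. j \<in> F \<Longrightarrow> f j \<in> mpowX m k) \<Longrightarrow> (\<Sum>j\<in>F. f j) \<in> mpowX m k"
  by (induction F rule: infinite_finite_induct) (auto simp: mX_zero mX_add)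

lemma mX_mono: "p \<le> q \<Longrightarrow> mpowX m q \<subseteq> mpowX m p"
  using ip_mono[of p q m] by (auto simp: mX_iff subset_iff)

lemma mX_0: "mpowX m 0 = ctensor m"
  by (auto simp: mX_iff)

lemma mX_smult_pow: "is_ideal m \<Longrightarrow> b \<in> ideal_pow m p \<Longrightarrow> f \<in> ctensor m \<Longrightarrow> smult_ct b f \<in> mpowX m p"
  by (simp add: mX_iff ct_smult) (simp add: smult_ct_def ip_mult2)

lemma mX_smult_pow2: "is_ideal m \<Longrightarrow> b \<in> ideal_pow m p \<Longrightarrow> f \<in> mpowX m q \<Longrightarrow> smult_ct b f \<in> mpowX m (p + q)"
  by (simp add: mX_iff ct_smult) (simp add: smult_ct_def ip_prod)

lemma smult_sum: "smult_ct b (\<Sum>j\<in>F. f j) = (\<Sum>j\<in>F. smult_ct b (f j))"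
  by (rule ext) (simp add: smult_ct_def sum_fun_apply sum_distrib_left)

lemma smult_diff: "smult_ct b (f - g) = smult_ct b f - smult_ct b g"
  by (rule ext) (simp add: smult_ct_def algebra_simps)

lemma smult_add: "smult_ct b (f + g) = smult_ct b f + smult_ct b g"
  by (rule ext) (simp add: smult_ct_def algebra_simps)

lemma smult_assoc: "smult_ct a (smult_ct b f) = smult_ct (a * b) f"
  by (rule ext) (simp add: smult_ct_def algebra_simps)

lemma smult_zero1[simp]: "smult_ct 0 f = 0"
  by (rule ext) (simp add: smult_ct_def)

lemma smult_zero2[simp]: "smult_ct b 0 = 0"
  by (rule ext) (simp add: smult_ct_def)

lemma mconv_smult: assumes "is_ideal m" "mconv m s l"
  shows "mconv m (\<lambda>n. smult_ct b (s n)) (smult_ct b l)"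
  using assms unfolding mconv_def by (metis smult_diff mX_smult)

lemma mconv_shift: assumes "mconv m s l" "\<And>n. n \<ge> N \<Longrightarrow> s' n = s n - C"
  shows "mconv m s' (l - C)"
  unfolding mconv_def
proof
  fix k
  obtain N' where "\<forall>n\<ge>N'. s n - l \<in> mpowX m k" using assms(1) unfolding mconv_def by blast
  then have "\<forall>n\<ge>max N N'. s' n - (l - C) \<in> mpowX m k" using assms(2) by simp
  then show "\<exists>N. \<forall>n\<ge>N. s' n - (l - C) \<in> mpowX m k" by blast
qed



locale ctx =
  fixes m :: "'b::comm_ring_1 set" and M :: "('i \<Rightarrow> 'b) set"
  assumes ideal: "is_ideal m" and sub: "B_submodule m M" and pc: "pseudoclosed m M"
begin

lemma M_ct: "x \<in> M \<Longrightarrow> x \<in> ctensor m" using sub by (auto simp: B_submodule_def)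
lemma M_zero: "0 \<in> M" using sub by (auto simp: B_submodule_def)
lemma M_add: "x \<in> M \<Longrightarrow> y \<in> M \<Longrightarrow> x + y \<in> M" using sub by (auto simp: B_submodule_def)
lemma M_smult: "x \<in> M \<Longrightarrow> smult_ct b x \<in> M" using sub by (auto simp: B_submodule_def)
lemma M_diff: "x \<in> M \<Longrightarrow> y \<in> M \<Longrightarrow> x - y \<in> M"
  using M_add[of x "smult_ct (-1) y"] M_smult[of y "-1"] by (simp add: smult_neg1)
lemma M_sum: "(\<And>j. j \<in> F \<Longrightarrow> f j \<in> M) \<Longrightarrow> (\<Sum>j\<in>F. f j) \<in> M"
  by (induction F rule: infinite_finite_induct) (auto simp: M_zero M_add)

lemma mY_iff: "s \<in> mpowY m k M \<longleftrightarrow> (\<exists>(b::nat \<Rightarrow> 'b) (y::nat \<Rightarrow> 'i \<Rightarrow> 'b) (\<kappa>::nat \<Rightarrow> nat).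
      (\<forall>j. y j \<in> M) \<and> (\<forall>j. \<kappa> j \<ge> k \<and> b j \<in> ideal_pow m (\<kappa> j))
      \<and> filterlim \<kappa> at_top sequentially
      \<and> mconv m (\<lambda>n. \<Sum>j<n. smult_ct (b j) (y j)) s)"
  by (simp add: mpowY_def)

lemma Y_sub_X: assumes "x \<in> mpowY m c M" shows "x \<in> mpowX m c"
proof -
  obtain b y \<kappa> where 1: "\<forall>j. y j \<in> M" "\<forall>j. \<kappa> j \<ge> c \<and> b j \<in> ideal_pow m (\<kappa> j)"
     "mconv m (\<lambda>n. \<Sum>j<n. smult_ct (b j) (y j)) x" using assms unfolding mY_iff by blast
  have S: "(\<Sum>j<n. smult_ct (b j) (y j)) \<in> mpowX m c" for n
  proof (rule mX_sum)
    fix j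
    have "b j \<in> ideal_pow m c" using 1(2) ip_mono[of c "\<kappa> j" m] by blast
    then show "smult_ct (b j) (y j) \<in> mpowX m c" using mX_smult_pow[OF ideal] 1(1) M_ct by blast
  qed
  obtain N where "\<forall>n\<ge>N. (\<Sum>j<n. smult_ct (b j) (y j)) - x \<in> mpowX m c" using 1(3) unfolding mconv_def by blast
  then have "(\<Sum>j<N. smult_ct (b j) (y j)) - x \<in> mpowX m c" by blast
  from mX_diff[OF ideal S[of N] this] show ?thesis by simp
qed

lemma Y_mono: "c \<le> c' \<Longrightarrow> x \<in> mpowY m c' M \<Longrightarrow> x \<in> mpowY m c M"
  unfolding mY_iff by (meson order_trans)

lemma Y_sub_M: "x \<in> mpowY m c M \<Longrightarrow> x \<in> M"
  using Y_mono[of 0 c x] pc unfolding pseudoclosed_def BY_def by blast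

lemma Y_single: assumes "b \<in> ideal_pow m c" "y \<in> M" shows "smult_ct b y \<in> mpowY m c M"
  unfolding mY_iff
proof (intro exI conjI)
  let ?b = "\<lambda>j::nat. if j = 0 then b else 0"
  show "\<forall>j. (\<lambda>_. y) j \<in> M" using assms by simp
  show "\<forall>j. c \<le> c + j \<and> ?b j \<in> ideal_pow m (c + j)" using assms by (simp add: ip_zero)
  show "filterlim (\<lambda>j. c + j) at_top sequentially"
    by (rule filterlim_at_top_mono[OF filterlim_ident]) auto
  have "(\<Sum>j<n. smult_ct (?b j) y) = smult_ct b y" if "n \<ge> 1" for n
  proof -
    have "(\<Sum>j<n. smult_ct (?b j) y) = (\<Sum>j<n. if j = 0 then smult_ct b y else 0)"
      by (rule sum.cong) auto
    also have "\<dots> = smult_ct b y" using that by (subst sum.delta) auto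
    finally show ?thesis .
  qed
  then show "mconv m (\<lambda>n. \<Sum>j<n. smult_ct (?b j) ((\<lambda>_. y) j)) (smult_ct b y)"
    unfolding mconv_def by (intro allI exI[of _ 1]) (auto simp: mX_zero)
qed

lemma Y_zero: "0 \<in> mpowY m c M"
  using Y_single[OF ip_zero M_zero] by simp

lemma Y_scale: assumes "e \<in> ideal_pow m p" "x \<in> mpowY m c M"
  shows "smult_ct e x \<in> mpowY m (c + p) M"
proof -
  obtain b y \<kappa> where 1: "\<forall>j. y j \<in> M" "\<forall>j. \<kappa> j \<ge> c \<and> b j \<in> ideal_pow m (\<kappa> j)"
     "filterlim \<kappa> at_top sequentially"
     "mconv m (\<lambda>n. \<Sum>j<n. smult_ct (b j) (y j)) x" using assms(2) unfolding mY_iff by blast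
  show ?thesis unfolding mY_iff
  proof (intro exI conjI)
    show "\<forall>j. y j \<in> M" by fact
    show "\<forall>j. c + p \<le> \<kappa> j + p \<and> e * b j \<in> ideal_pow m (\<kappa> j + p)"
    proof
      fix j
      have "e * b j \<in> ideal_pow m (p + \<kappa> j)" using ip_prod[OF ideal assms(1)] 1(2) by blast
      then show "c + p \<le> \<kappa> j + p \<and> e * b j \<in> ideal_pow m (\<kappa> j + p)"
        using 1(2) by (simp add: add.commute)
    qed
    show "filterlim (\<lambda>j. \<kappa> j + p) at_top sequentially"
      by (rule filterlim_at_top_mono[OF 1(3)]) auto
    have "(\<Sum>j<n. smult_ct (e * b j) (y j)) = smult_ct e (\<Sum>j<n. smult_ct (b j) (y j))" for n
      by (simp add: smult_sum smult_assoc)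
    then show "mconv m (\<lambda>n. \<Sum>j<n. smult_ct (e * b j) (y j)) (smult_ct e x)"
      using mconv_smult[OF ideal 1(4)] by simp
  qed
qed

end


context ctx begin

lemma term_in_X:
  assumes "b \<in> ideal_pow m q" "y \<in> M" "K \<le> q"
  shows "smult_ct b y \<in> mpowX m K"
  using mX_smult_pow[OF ideal assms(1) M_ct[OF assms(2)]] mX_mono[OF assms(3)] by blast

lemma alg: "(a::'a::ab_group_add) = x + y \<Longrightarrow> a - s = x + (y - z) + (z - s)"
  by (simp add: algebra_simps)

lemma DS:
  fixes d :: "nat \<Rightarrow> 'i \<Rightarrow> 'b" and \<phi> :: "nat \<Rightarrow> nat"
  assumes d: "\<And>k. d k \<in> mpowY m (\<phi> k) M" and \<phi>c: "\<And>k. c \<le> \<phi> k"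
    and \<phi>lim: "filterlim \<phi> at_top sequentially"
    and conv: "mconv m (\<lambda>n. \<Sum>k<n. d k) s"
  shows "s \<in> mpowY m c M"
proof -
  have "\<forall>k. \<exists>b y \<kappa>. (\<forall>j. y j \<in> M) \<and> (\<forall>j. \<kappa> j \<ge> \<phi> k \<and> b j \<in> ideal_pow m (\<kappa> j))
      \<and> filterlim \<kappa> at_top sequentially
      \<and> mconv m (\<lambda>n. \<Sum>j<n. smult_ct (b j) (y j)) (d k)"
    using d unfolding mY_iff by blast
  from choice[OF this] obtain b where "\<forall>k. \<exists>y \<kappa>. (\<forall>j. y j \<in> M) \<and> (\<forall>j. \<kappa> j \<ge> \<phi> k \<and> b k j \<in> ideal_pow m (\<kappa> j))
      \<and> filterlim \<kappa> at_top sequentially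
      \<and> mconv m (\<lambda>n. \<Sum>j<n. smult_ct (b k j) (y j)) (d k)" by blast
  from choice[OF this] obtain y where "\<forall>k. \<exists>\<kappa>. (\<forall>j. y k j \<in> M) \<and> (\<forall>j. \<kappa> j \<ge> \<phi> k \<and> b k j \<in> ideal_pow m (\<kappa> j))
      \<and> filterlim \<kappa> at_top sequentially
      \<and> mconv m (\<lambda>n. \<Sum>j<n. smult_ct (b k j) (y k j)) (d k)" by blast
  from choice[OF this] obtain \<kappa> where "\<forall>k. (\<forall>j. y k j \<in> M) \<and> (\<forall>j. \<kappa> k j \<ge> \<phi> k \<and> b k j \<in> ideal_pow m (\<kappa> k j))
      \<and> filterlim (\<kappa> k) at_top sequentially
      \<and> mconv m (\<lambda>n. \<Sum>j<n. smult_ct (b k j) (y k j)) (d k)" by blast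
  then have  
    by_: "\<And>k j. y k j \<in> M" and bk: "\<And>k j. \<kappa> k j \<ge> \<phi> k \<and> b k j \<in> ideal_pow m (\<kappa> k j)"
    and kl: "\<And>k. filterlim (\<kappa> k) at_top sequentially"
    and kc: "\<And>k. mconv m (\<lambda>n. \<Sum>j<n. smult_ct (b k j) (y k j)) (d k)"
    by auto
  define t where "t = (\<lambda>p::nat\<times>nat. smult_ct (b (fst p) (snd p)) (y (fst p) (snd p)))"
  define B where "B = (\<lambda>j. b (fst (prod_decode j)) (snd (prod_decode j)))"
  define Y where "Y = (\<lambda>j. y (fst (prod_decode j)) (snd (prod_decode j)))"
  define K where "K = (\<lambda>j. \<kappa> (fst (prod_decode j)) (snd (prod_decode j)))"
  have tB: "smult_ct (B j) (Y j) = t (prod_decode j)" for j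
    by (simp add: t_def B_def Y_def)
  have SD: "(\<Sum>j<n. smult_ct (B j) (Y j)) = (\<Sum>p\<in>prod_decode ` {..<n}. t p)" for n
    by (simp add: tB sum.reindex[OF inj_prod_decode])
  have bound: "\<exists>N. \<forall>n\<ge>N. A \<subseteq> prod_decode ` {..<n}" if "finite A" for A
  proof -
    obtain N where N: "\<forall>x\<in>prod_encode ` A. x < N"
      using finite_nat_set_iff_bounded \<open>finite A\<close> by blast
    have "A \<subseteq> prod_decode ` {..<n}" if "n \<ge> N" for n
    proof
      fix p assume "p \<in> A"
      then have "prod_encode p < n" using N that by force
      then show "p \<in> prod_decode ` {..<n}"
        by (metis lessThan_iff prod_encode_inverse rev_image_eqI)
    qed
    then show ?thesis by blast
  qed
  show ?thesis unfolding mY_iff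
  proof (intro exI conjI)
    show "\<forall>j. Y j \<in> M" using by_ by (simp add: Y_def)
    show "\<forall>j. c \<le> K j \<and> B j \<in> ideal_pow m (K j)"
    proof
      fix j
      show "c \<le> K j \<and> B j \<in> ideal_pow m (K j)"
        using bk[of "fst (prod_decode j)" "snd (prod_decode j)"] \<phi>c[of "fst (prod_decode j)"]
        unfolding K_def B_def by linarith
    qed
    show "filterlim K at_top sequentially"
      unfolding filterlim_at_top
    proof
      fix Z
      obtain k0 where k0: "\<forall>k\<ge>k0. Z \<le> \<phi> k"
        using \<phi>lim unfolding filterlim_at_top eventually_sequentially by blast
      have "\<forall>k. \<exists>n. \<forall>j\<ge>n. Z \<le> \<kappa> k j"
        using kl unfolding filterlim_at_top eventually_sequentially by blast
      from choice[OF this] obtain nn where nn: "\<And>k j. j \<ge> nn k \<Longrightarrow> Z \<le> \<kappa> k j" by blast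
      define A where "A = (SIGMA k:{..<k0}. {..<nn k})"
      have "finite A" by (simp add: A_def)
      then obtain N where N: "\<forall>n\<ge>N. A \<subseteq> prod_decode ` {..<n}" using bound by blast
      have "Z \<le> K j" if "j \<ge> N" for j
      proof -
        obtain k l where kl: "prod_decode j = (k, l)" by (cases "prod_decode j") auto
        have "(k, l) \<notin> A"
        proof
          assume "(k, l) \<in> A"
          then have "(k,l) \<in> prod_decode ` {..<j}" using N that by blast
          then obtain j' where "j' < j" "prod_decode j' = prod_decode j" using kl by auto
          then show False using inj_prod_decode[of UNIV] by (auto simp: inj_on_def)
        qed
        then have "k \<ge> k0 \<or> l \<ge> nn k" by (auto simp: A_def)
        then have "Z \<le> \<kappa> k l"
        proof
          assume "k0 \<le> k" then show ?thesis using k0 bk[of k l] by (meson order_trans)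
        next
          assume "nn k \<le> l" then show ?thesis using nn by blast
        qed
        then show ?thesis by (simp add: K_def kl)
      qed
      then show "eventually (\<lambda>j. Z \<le> K j) sequentially"
        unfolding eventually_sequentially by blast
    qed
    show "mconv m (\<lambda>n. \<Sum>j<n. smult_ct (B j) (Y j)) s"
      unfolding mconv_def
    proof
      fix K0
      obtain k1 where k1: "\<forall>k\<ge>k1. K0 \<le> \<phi> k"
        using \<phi>lim unfolding filterlim_at_top eventually_sequentially by blast
      obtain k2 where k2: "\<forall>n\<ge>k2. (\<Sum>k<n. d k) - s \<in> mpowX m K0"
        using conv unfolding mconv_def by blast
      define k0 where "k0 = max k1 k2"
      have "\<forall>k. \<exists>n. \<forall>j\<ge>n. K0 \<le> \<kappa> k j \<and> (\<Sum>i<j. t (k, i)) - d k \<in> mpowX m K0"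
      proof
        fix k
        obtain n1 where n1: "\<forall>j\<ge>n1. K0 \<le> \<kappa> k j"
          using kl[of k] unfolding filterlim_at_top eventually_sequentially by blast
        obtain n2 where n2: "\<forall>j\<ge>n2. (\<Sum>i<j. smult_ct (b k i) (y k i)) - d k \<in> mpowX m K0"
          using kc[of k] unfolding mconv_def by blast
        show "\<exists>n. \<forall>j\<ge>n. K0 \<le> \<kappa> k j \<and> (\<Sum>i<j. t (k, i)) - d k \<in> mpowX m K0"
          using n1 n2 by (intro exI[of _ "max n1 n2"]) (simp add: t_def)
      qed
      from choice[OF this] obtain nn where nn: "\<And>k j. j \<ge> nn k \<Longrightarrow> K0 \<le> \<kappa> k j \<and> (\<Sum>i<j. t (k, i)) - d k \<in> mpowX m K0"
        by blast
      define A where "A = (SIGMA k:{..<k0}. {..<nn k})"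
      have "finite A" by (simp add: A_def)
      then obtain N where N: "\<forall>n\<ge>N. A \<subseteq> prod_decode ` {..<n}" using bound by blast
      have "(\<Sum>j<n. smult_ct (B j) (Y j)) - s \<in> mpowX m K0" if "n \<ge> N" for n
      proof -
        define D where "D = prod_decode ` {..<n}"
        have AD: "A \<subseteq> D" using N that by (simp add: D_def)
        have fD: "finite D" by (simp add: D_def)
        have "(\<Sum>j<n. smult_ct (B j) (Y j)) = (\<Sum>p\<in>D. t p)" by (simp add: SD D_def)
        also have "\<dots> = (\<Sum>p\<in>D - A. t p) + (\<Sum>p\<in>A. t p)"
          using sum.subset_diff[OF AD fD] .
        also have "(\<Sum>p\<in>A. t p) = (\<Sum>k<k0. \<Sum>i<nn k. t (k, i))"
          unfolding A_def by (simp add: sum.Sigma)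
        finally have S: "(\<Sum>j<n. smult_ct (B j) (Y j)) = (\<Sum>p\<in>D - A. t p) + (\<Sum>k<k0. \<Sum>i<nn k. t (k, i))" .
        have eq: "(\<Sum>j<n. smult_ct (B j) (Y j)) - s = (\<Sum>p\<in>D - A. t p)
            + (\<Sum>k<k0. (\<Sum>i<nn k. t (k, i)) - d k) + ((\<Sum>k<k0. d k) - s)"
          unfolding sum_subtractf using alg[OF S] .
        have 1: "(\<Sum>p\<in>D - A. t p) \<in> mpowX m K0"
        proof (rule mX_sum)
          fix p assume p: "p \<in> D - A"
          obtain k l where pkl: "p = (k, l)" by (cases p) auto
          have "k \<ge> k0 \<or> l \<ge> nn k" using p by (auto simp: A_def pkl)
          then have "K0 \<le> \<kappa> k l"
          proof
            assume "k0 \<le> k" then have "k1 \<le> k" unfolding k0_def by simp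
            then show ?thesis using k1 bk[of k l] by (meson order_trans)
          next
            assume "nn k \<le> l" then show ?thesis using nn by blast
          qed
          then show "t p \<in> mpowX m K0" unfolding pkl t_def
            using term_in_X[of "b k l" "\<kappa> k l" "y k l" K0] bk[of k l] by_[of k l] by simp
        qed
        have 2: "(\<Sum>k<k0. (\<Sum>i<nn k. t (k, i)) - d k) \<in> mpowX m K0"
          using nn by (intro mX_sum) blast
        have 3: "(\<Sum>k<k0. d k) - s \<in> mpowX m K0"
          using k2 unfolding k0_def by simp
        show ?thesis unfolding eq using 1 2 3 by (intro mX_add)
      qed
      then show "\<exists>N. \<forall>n\<ge>N. (\<Sum>j<n. smult_ct (B j) (Y j)) - s \<in> mpowX m K0" by blast
    qed
  qed
qed

end


context ctx begin

lemma Y_add: assumes "x \<in> mpowY m c M" "y \<in> mpowY m c M" shows "x + y \<in> mpowY m c M"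
proof -
  define d where "d = (\<lambda>k::nat. if k = 0 then x else if k = 1 then y else 0)"
  define \<phi> where "\<phi> = (\<lambda>k::nat. if k \<le> 1 then c else c + k)"
  have S: "(\<Sum>k<Suc (Suc n). d k) = x + y" for n
    by (induction n) (simp_all add: d_def)
  show ?thesis
  proof (rule DS[of d \<phi>])
    show "d k \<in> mpowY m (\<phi> k) M" for k
      using assms by (auto simp: d_def \<phi>_def Y_zero)
    show "c \<le> \<phi> k" for k by (simp add: \<phi>_def)
    show "filterlim \<phi> at_top sequentially"
      by (rule filterlim_at_top_mono[OF filterlim_ident])
         (auto simp: \<phi>_def eventually_sequentially intro: exI[of _ 2])
    have "(\<Sum>k<n. d k) - (x + y) \<in> mpowX m K" if "n \<ge> 2" for n K
    proof -
      obtain n' where "n = Suc (Suc n')" using \<open>n \<ge> 2\<close> by (metis add_2_eq_Suc le_Suc_ex)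
      then show ?thesis using S by (simp add: mX_zero)
    qed
    then show "mconv m (\<lambda>n. \<Sum>k<n. d k) (x + y)"
      unfolding mconv_def by blast
  qed
qed

lemma Y_sum: "(\<And>j. j \<in> F \<Longrightarrow> f j \<in> mpowY m c M) \<Longrightarrow> (\<Sum>j\<in>F. f j) \<in> mpowY m c M"
  by (induction F rule: infinite_finite_induct) (auto simp: Y_zero Y_add)

end

locale ctx2 = ctx m M for m :: "'b::comm_ring_1 set" and M :: "('i \<Rightarrow> 'b) set" +
  fixes \<iota> :: "complex \<Rightarrow> 'b"
  assumes i1: "\<iota> 1 = 1" and iadd: "\<And>x y. \<iota> (x + y) = \<iota> x + \<iota> y"
    and imult: "\<And>x y. \<iota> (x * y) = \<iota> x * \<iota> y"
    and resid: "\<And>b. \<exists>!c. b - \<iota> c \<in> m"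
begin

lemma iota0: "\<iota> 0 = 0"
  using iadd[of 0 0] by simp

lemma alg2: "(c::'b) * u = 1 \<Longrightarrow> u * (e * c + S1) * W + (S2 - S1 * u * W) = e * W + S2"
proof -
  assume h: "c * u = 1"
  have "u * (e * c + S1) * W + (S2 - S1 * u * W) = e * W * (c * u) + S2" by (simp add: algebra_simps)
  then show ?thesis using h by simp
qed

lemma L:
  assumes qf: "quasi_flat m M"
  shows "finite F \<Longrightarrow> (\<forall>i\<in>F. e i \<in> ideal_pow m k \<and> w i \<in> M)
     \<Longrightarrow> (\<Sum>i\<in>F. smult_ct (e i) (w i)) \<in> mpowX m (Suc k)
     \<Longrightarrow> (\<Sum>i\<in>F. smult_ct (e i) (w i)) \<in> mpowY m (Suc k) M"
proof (induction "card F" arbitrary: F w rule: less_induct)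
  case less
  note fin = less.prems(1) and ew = less.prems(2) and inX = less.prems(3)
  show ?case
  proof (cases "\<forall>i\<in>F. w i \<in> mpowX m 1")
    case True
    show ?thesis
    proof (rule Y_sum)
      fix i assume "i \<in> F"
      then have "w i \<in> mpowY m 1 M" using True ew qf unfolding quasi_flat_def by blast
      from Y_scale[OF _ this, of "e i" k] \<open>i \<in> F\<close> ew
      show "smult_ct (e i) (w i) \<in> mpowY m (Suc k) M" by simp
    qed
  next
    case False
    then obtain j where jF: "j \<in> F" and wj: "w j \<notin> mpowX m 1" by blast
    have "w j \<in> ctensor m" using ew jF M_ct by blast
    then have "\<not> (\<forall>i. w j i \<in> ideal_pow m 1)" using wj unfolding mX_iff by blast
    then obtain i0 where "w j i0 \<notin> ideal_pow m 1" by blast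
    then have i0: "w j i0 \<notin> m" unfolding ip_one[OF ideal] .
    define cc where "cc = (\<lambda>i. THE c. w i i0 - \<iota> c \<in> m)"
    have ccp: "w i i0 - \<iota> (cc i) \<in> m" for i
      unfolding cc_def by (rule theI'[OF resid])
    have ccj: "cc j \<noteq> 0"
    proof
      assume "cc j = 0"
      then show False using ccp[of j] i0 by (simp add: iota0)
    qed
    have s1: "(\<Sum>i\<in>F. e i * w i i0) \<in> ideal_pow m (Suc k)"
      using inX by (simp add: mX_iff sum_fun_apply smult_ct_def)
    have s2: "(\<Sum>i\<in>F. e i * (w i i0 - \<iota> (cc i))) \<in> ideal_pow m (Suc k)"
    proof (rule ip_sum)
      fix i assume "i \<in> F"
      then have "e i \<in> ideal_pow m k" using ew by blast
      moreover have "w i i0 - \<iota> (cc i) \<in> ideal_pow m 1" using ccp ip_one[OF ideal] by blast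
      ultimately show "e i * (w i i0 - \<iota> (cc i)) \<in> ideal_pow m (Suc k)"
        using ip_prod[OF ideal] by fastforce
    qed
    have "(\<Sum>i\<in>F. e i * \<iota> (cc i)) = (\<Sum>i\<in>F. e i * w i i0) - (\<Sum>i\<in>F. e i * (w i i0 - \<iota> (cc i)))"
      by (simp add: sum_subtractf[symmetric] algebra_simps)
    then have s3: "(\<Sum>i\<in>F. e i * \<iota> (cc i)) \<in> ideal_pow m (Suc k)"
      using ip_diff[OF ideal s1 s2] by simp
    define u where "u = \<iota> (1 / cc j)"
    have cu: "\<iota> (cc j) * u = 1" unfolding u_def using ccj imult[of "cc j" "1 / cc j"] i1 by simp
    define \<rho> where "\<rho> = u * (\<Sum>i\<in>F. e i * \<iota> (cc i))"
    have \<rho>m: "\<rho> \<in> ideal_pow m (Suc k)" unfolding \<rho>_def by (rule ip_mult[OF ideal s3])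
    define w' where "w' = (\<lambda>i. w i - smult_ct (\<iota> (cc i) * u) (w j))"
    have decomp: "(\<Sum>i\<in>F. smult_ct (e i) (w i)) = smult_ct \<rho> (w j) + (\<Sum>i\<in>F-{j}. smult_ct (e i) (w' i))"
    proof (rule ext)
      fix x
      have A: "(\<Sum>i\<in>F. e i * w i x) = e j * w j x + (\<Sum>i\<in>F-{j}. e i * w i x)"
        using sum.remove[OF fin jF] .
      have B: "(\<Sum>i\<in>F. e i * \<iota> (cc i)) = e j * \<iota> (cc j) + (\<Sum>i\<in>F-{j}. e i * \<iota> (cc i))"
        using sum.remove[OF fin jF] .
      have C: "(\<Sum>i\<in>F-{j}. e i * (w i x - \<iota> (cc i) * u * w j x))
          = (\<Sum>i\<in>F-{j}. e i * w i x) - (\<Sum>i\<in>F-{j}. e i * \<iota> (cc i)) * u * w j x"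
      proof -
        have "(\<Sum>i\<in>F-{j}. e i * \<iota> (cc i)) * u * w j x = (\<Sum>i\<in>F-{j}. e i * \<iota> (cc i) * u * w j x)"
          by (simp add: sum_distrib_right)
        then show ?thesis by (simp add: right_diff_distrib mult.assoc sum_subtractf)
      qed
      have D: "u * (e j * \<iota> (cc j) + (\<Sum>i\<in>F-{j}. e i * \<iota> (cc i))) * w j x
          + ((\<Sum>i\<in>F-{j}. e i * w i x) - (\<Sum>i\<in>F-{j}. e i * \<iota> (cc i)) * u * w j x)
          = e j * w j x + (\<Sum>i\<in>F-{j}. e i * w i x)" by (rule alg2[OF cu])
      show "(\<Sum>i\<in>F. smult_ct (e i) (w i)) x = (smult_ct \<rho> (w j) + (\<Sum>i\<in>F-{j}. smult_ct (e i) (w' i))) x"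
      proof -
        have L1: "(\<Sum>i\<in>F. smult_ct (e i) (w i)) x = (\<Sum>i\<in>F. e i * w i x)"
          by (simp add: sum_fun_apply smult_ct_def)
        have R1: "(smult_ct \<rho> (w j) + (\<Sum>i\<in>F-{j}. smult_ct (e i) (w' i))) x
           = \<rho> * w j x + (\<Sum>i\<in>F-{j}. e i * (w i x - \<iota> (cc i) * u * w j x))"
          by (simp add: sum_fun_apply smult_ct_def w'_def)
        show ?thesis unfolding L1 R1 unfolding \<rho>_def A B C by (rule D[symmetric])
      qed
    qed
    have wjc: "w j \<in> ctensor m" by fact
    have T1: "smult_ct \<rho> (w j) \<in> mpowX m (Suc k)" by (rule mX_smult_pow[OF ideal \<rho>m wjc])
    have "(\<Sum>i\<in>F-{j}. smult_ct (e i) (w' i)) = (\<Sum>i\<in>F. smult_ct (e i) (w i)) - smult_ct \<rho> (w j)"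
      using decomp by simp
    then have T2: "(\<Sum>i\<in>F-{j}. smult_ct (e i) (w' i)) \<in> mpowX m (Suc k)"
      using mX_diff[OF ideal inX T1] by simp
    have wM: "\<forall>i\<in>F-{j}. e i \<in> ideal_pow m k \<and> w' i \<in> M"
      using ew jF by (auto simp: w'_def intro!: M_diff M_smult)
    have "card (F - {j}) < card F" using fin jF by (rule card_Diff1_less)
    then have T3: "(\<Sum>i\<in>F-{j}. smult_ct (e i) (w' i)) \<in> mpowY m (Suc k) M"
      using less.hyps[of "F - {j}" w'] fin wM T2 by blast
    have T4: "smult_ct \<rho> (w j) \<in> mpowY m (Suc k) M"
      using Y_single[OF \<rho>m] ew jF by blast
    show ?thesis unfolding decomp by (rule Y_add[OF T4 T3])
  qed
qed

end


context ctx2 begin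

lemma qf_iv:
  assumes qf: "quasi_flat m M"
  shows "M \<inter> mpowX m (Suc n) \<subseteq> mpowY m (Suc n) M"
proof (induction n)
  case 0 then show ?case using qf unfolding quasi_flat_def by simp
next
  case (Suc n)
  let ?k = "Suc n"
  show ?case
  proof
    fix x assume x: "x \<in> M \<inter> mpowX m (Suc ?k)"
    then have "x \<in> mpowX m ?k" using mX_mono[of ?k "Suc ?k" m] by auto
    with x Suc.IH have "x \<in> mpowY m ?k M" by blast
    then obtain b y \<kappa> where 1: "\<forall>j. y j \<in> M" "\<forall>j. \<kappa> j \<ge> ?k \<and> b j \<in> ideal_pow m (\<kappa> j)"
     "filterlim \<kappa> at_top sequentially"
     "mconv m (\<lambda>n. \<Sum>j<n. smult_ct (b j) (y j)) x" unfolding mY_iff by blast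
    obtain N where N: "\<forall>j\<ge>N. Suc ?k \<le> \<kappa> j"
      using 1(3) unfolding filterlim_at_top eventually_sequentially by blast
    define SN where "SN = (\<Sum>j<N. smult_ct (b j) (y j))"
    define b' where "b' = (\<lambda>j. if j < N then 0 else b j)"
    have xS: "x - SN \<in> mpowY m (Suc ?k) M" unfolding mY_iff
    proof (intro exI conjI)
      show "\<forall>j. y j \<in> M" by fact
      show "\<forall>j. Suc ?k \<le> max (\<kappa> j) (Suc ?k) \<and> b' j \<in> ideal_pow m (max (\<kappa> j) (Suc ?k))"
      proof
        fix j
        show "Suc ?k \<le> max (\<kappa> j) (Suc ?k) \<and> b' j \<in> ideal_pow m (max (\<kappa> j) (Suc ?k))"
        proof (cases "j < N")
          case True then show ?thesis by (simp add: b'_def ip_zero)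
        next
          case False
          then have "max (\<kappa> j) (Suc ?k) = \<kappa> j" using N by simp
          then show ?thesis using False 1(2) by (simp add: b'_def)
        qed
      qed
      show "filterlim (\<lambda>j. max (\<kappa> j) (Suc ?k)) at_top sequentially"
        by (rule filterlim_at_top_mono[OF 1(3)]) auto
      have "(\<Sum>j<n. smult_ct (b' j) (y j)) = (\<Sum>j<n. smult_ct (b j) (y j)) - SN" if "n \<ge> N" for n
      proof -
        have "(\<Sum>j<n. smult_ct (b j) (y j)) = (\<Sum>j<n. smult_ct (b' j) (y j) + (if j < N then smult_ct (b j) (y j) else 0))"
          by (rule sum.cong) (auto simp: b'_def)
        also have "\<dots> = (\<Sum>j<n. smult_ct (b' j) (y j)) + (\<Sum>j<n. if j < N then smult_ct (b j) (y j) else 0)"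
          by (rule sum.distrib)
        also have "(\<Sum>j<n. if j < N then smult_ct (b j) (y j) else 0) = (\<Sum>j\<in>{..<n} \<inter> {j. j < N}. smult_ct (b j) (y j))"
          by (simp add: sum.inter_restrict)
        also have "{..<n} \<inter> {j. j < N} = {..<N}" using that by auto
        finally have e: "(\<Sum>j<n. smult_ct (b j) (y j)) = (\<Sum>j<n. smult_ct (b' j) (y j)) + SN"
          unfolding SN_def .
        show ?thesis unfolding e by (rule add_diff_cancel[symmetric])
      qed
      then show "mconv m (\<lambda>n. \<Sum>j<n. smult_ct (b' j) (y j)) (x - SN)"
        by (rule mconv_shift[OF 1(4)])
    qed
    have "x - SN \<in> mpowX m (Suc ?k)" by (rule Y_sub_X[OF xS])
    moreover have "x \<in> mpowX m (Suc ?k)" using x by blast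
    ultimately have "x - (x - SN) \<in> mpowX m (Suc ?k)" using mX_diff[OF ideal] by blast
    then have SNX: "SN \<in> mpowX m (Suc ?k)" by simp
    have "\<forall>j\<in>{..<N}. b j \<in> ideal_pow m ?k \<and> y j \<in> M"
      using 1(1,2) ip_mono by blast
    then have "SN \<in> mpowY m (Suc ?k) M"
      using L[OF qf, of "{..<N}" b ?k y] SNX unfolding SN_def by blast
    from Y_add[OF this xS] show "x \<in> mpowY m (Suc ?k) M" by simp
  qed
qed

lemma qf_iv': "quasi_flat m M \<Longrightarrow> k \<ge> 1 \<Longrightarrow> M \<inter> mpowX m k \<subseteq> mpowY m k M"
  using qf_iv[of "k - 1"] by simp

lemma iv_closed:
  assumes iv: "\<forall>k\<ge>1. M \<inter> mpowX m k \<subseteq> mpowY m k M"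
  shows "madic_closed m M"
  unfolding madic_closed_def
proof (intro ballI impI)
  fix x assume xc: "x \<in> ctensor m" and app: "\<forall>k. \<exists>y\<in>M. x - y \<in> mpowX m k"
  from choice[OF app[unfolded Bex_def]] obtain yy where yy: "\<And>k. yy k \<in> M" "\<And>k. x - yy k \<in> mpowX m k"
    by blast
  define d where "d = (\<lambda>k. yy (k + 2) - yy (k + 1))"
  have dY: "d k \<in> mpowY m (Suc k) M" for k
  proof -
    have "x - yy (k + 2) \<in> mpowX m (Suc k)" using yy(2)[of "k+2"] mX_mono[of "Suc k" "k + 2" m] by auto
    moreover have "x - yy (k + 1) \<in> mpowX m (Suc k)" using yy(2)[of "k+1"] by simp
    ultimately have "(x - yy (k + 1)) - (x - yy (k + 2)) \<in> mpowX m (Suc k)" using mX_diff[OF ideal] by blast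
    then have "d k \<in> mpowX m (Suc k)" by (simp add: d_def)
    moreover have "d k \<in> M" using yy(1) M_diff by (simp add: d_def)
    ultimately show ?thesis using iv by auto
  qed
  have tel: "(\<Sum>k<n. d k) = yy (n + 1) - yy 1" for n
    by (induction n) (simp_all add: d_def)
  have "x - yy 1 \<in> mpowY m 1 M"
  proof (rule DS[of d Suc])
    show "d k \<in> mpowY m (Suc k) M" for k by (rule dY)
    show "1 \<le> Suc k" for k by simp
    show "filterlim Suc at_top sequentially" by (rule filterlim_Suc)
    show "mconv m (\<lambda>n. \<Sum>k<n. d k) (x - yy 1)"
      unfolding mconv_def tel
    proof (intro allI)
      fix K :: nat
      show "\<exists>N. \<forall>n\<ge>N. yy (n + 1) - yy 1 - (x - yy 1) \<in> mpowX m K"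
      proof (intro exI[of _ K] allI impI)
      fix n :: nat assume "K \<le> n"
      have "x - yy (n + 1) \<in> mpowX m K" using yy(2)[of "n+1"] mX_mono[of K "n + 1" m] \<open>K \<le> n\<close> by auto
      then have "- (x - yy (n + 1)) \<in> mpowX m K" by (rule mX_neg[OF ideal])
      then show "yy (n + 1) - yy 1 - (x - yy 1) \<in> mpowX m K" by (simp add: algebra_simps)
    qed
    qed
  qed
  then have "x - yy 1 \<in> M" by (rule Y_sub_M)
  from M_add[OF this yy(1)[of 1]] show "x \<in> M" by simp
qed

lemma iii_qf:
  assumes iii: "\<forall>k\<ge>1. M \<inter> mpowX m k \<subseteq> {x + y | x y. x \<in> mpowY m k M \<and> y \<in> mpowX m (k + 1)}"
  shows "quasi_flat m M"
  unfolding quasi_flat_def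
proof
  fix x assume x: "x \<in> M \<inter> mpowX m 1"
  have ex: "\<exists>p. fst p \<in> mpowY m (Suc n) M \<and> snd p \<in> mpowX m (Suc (Suc n)) \<and> r = fst p + snd p"
    if True: "r \<in> M \<inter> mpowX m (Suc n)" for n r
  proof -
      have sub: "M \<inter> mpowX m (Suc n) \<subseteq> {x + y | x y. x \<in> mpowY m (Suc n) M \<and> y \<in> mpowX m (Suc n + 1)}"
        by (rule mp[OF spec[OF iii, of "Suc n"]]) simp
      have "r \<in> {x + y | x y. x \<in> mpowY m (Suc n) M \<and> y \<in> mpowX m (Suc n + 1)}"
        using sub True by blast
      then obtain a r' where "a \<in> mpowY m (Suc n) M" "r' \<in> mpowX m (Suc n + 1)" "r = a + r'"
        by blast
      then show ?thesis by (intro exI[of _ "(a, r')"]) simp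
  qed
  define G where "G = (\<lambda>n r. SOME p. fst p \<in> mpowY m (Suc n) M \<and> snd p \<in> mpowX m (Suc (Suc n)) \<and> r = fst p + snd p)"
  have G: "fst (G n r) \<in> mpowY m (Suc n) M \<and> snd (G n r) \<in> mpowX m (Suc (Suc n)) \<and> r = fst (G n r) + snd (G n r)"
    if "r \<in> M \<inter> mpowX m (Suc n)" for n r
    unfolding G_def by (rule someI_ex[OF ex[OF that]])
  define rr where "rr = rec_nat x (\<lambda>n r. snd (G n r))"
  have rr0: "rr 0 = x" by (simp add: rr_def)
  have rrS: "rr (Suc n) = snd (G n (rr n))" for n by (simp add: rr_def)
  define dd where "dd = (\<lambda>n. fst (G n (rr n)))"
  have inv: "rr n \<in> M \<inter> mpowX m (Suc n)" for n
  proof (induction n)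
    case 0 then show ?case using x rr0 by simp
  next
    case (Suc n)
    have g: "fst (G n (rr n)) \<in> mpowY m (Suc n) M" "snd (G n (rr n)) \<in> mpowX m (Suc (Suc n))"
      "rr n = fst (G n (rr n)) + snd (G n (rr n))" using G[OF Suc.IH] by auto
    have "snd (G n (rr n)) = rr n - fst (G n (rr n))" using g(3) by (simp add: algebra_simps)
    also have "\<dots> \<in> M" using Suc.IH Y_sub_M[OF g(1)] M_diff by blast
    finally show ?case using g(2) rrS by simp
  qed
  have ddY: "dd n \<in> mpowY m (Suc n) M" for n using G[OF inv[of n]] by (simp add: dd_def)
  have part: "x = (\<Sum>k<n. dd k) + rr n" for n
  proof (induction n)
    case 0 then show ?case by (simp add: rr0)
  next
    case (Suc n)
    have "rr n = dd n + rr (Suc n)" using G[OF inv[of n]] by (simp add: dd_def rrS)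
    then show ?case using Suc.IH by (simp add: algebra_simps)
  qed
  have "x \<in> mpowY m 1 M"
  proof (rule DS[of dd Suc])
    show "dd k \<in> mpowY m (Suc k) M" for k by (rule ddY)
    show "1 \<le> Suc k" for k by simp
    show "filterlim Suc at_top sequentially" by (rule filterlim_Suc)
    show "mconv m (\<lambda>n. \<Sum>k<n. dd k) x"
      unfolding mconv_def
    proof (intro allI)
      fix K :: nat
      show "\<exists>N. \<forall>n\<ge>N. (\<Sum>k<n. dd k) - x \<in> mpowX m K"
      proof (intro exI[of _ K] allI impI)
      fix n :: nat assume "K \<le> n"
      have "rr n \<in> mpowX m K" using inv[of n] mX_mono[of K "Suc n" m] \<open>K \<le> n\<close> by auto
      then have "- rr n \<in> mpowX m K" by (rule mX_neg[OF ideal])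
      moreover have "(\<Sum>k<n. dd k) - x = - rr n" using part[of n] by (simp add: algebra_simps)
      ultimately show "(\<Sum>k<n. dd k) - x \<in> mpowX m K" by simp
    qed
    qed
  qed
  then show "x \<in> mpowY m 1 M" .
qed

end

theorem proposition2p43:
  fixes \<iota> :: "complex \<Rightarrow> 'b::comm_ring_1"
    and m :: "'b set"
    and M :: "('i \<Rightarrow> 'b) set"
  assumes "deformation_base \<iota> m"
    and "B_submodule m M"
    and "pseudoclosed m M"
  shows "(quasi_flat m M \<longleftrightarrow> quasi_flat m M \<and> madic_closed m M)
       \<and> (quasi_flat m M \<longleftrightarrow>
            (\<forall>k\<ge>1. M \<inter> mpowX m k \<subseteq> {x + y | x y. x \<in> mpowY m k M \<and> y \<in> mpowX m (k + 1)}))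
       \<and> (quasi_flat m M \<longleftrightarrow> (\<forall>k\<ge>1. M \<inter> mpowX m k \<subseteq> mpowY m k M))"
proof -
  have db: "\<iota> 1 = 1" "\<And>x y. \<iota> (x + y) = \<iota> x + \<iota> y" "\<And>x y. \<iota> (x * y) = \<iota> x * \<iota> y"
    "is_ideal m" "\<And>b. \<exists>!c. b - \<iota> c \<in> m"
    using assms(1) unfolding deformation_base_def by auto
  interpret ctx2 m M \<iota>
    by unfold_locales (use db assms(2) assms(3) in auto)
  have iv: "quasi_flat m M \<longleftrightarrow> (\<forall>k\<ge>1. M \<inter> mpowX m k \<subseteq> mpowY m k M)"
  proof
    assume "quasi_flat m M"
    then show "\<forall>k\<ge>1. M \<inter> mpowX m k \<subseteq> mpowY m k M" using qf_iv' by blast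
  next
    assume "\<forall>k\<ge>1. M \<inter> mpowX m k \<subseteq> mpowY m k M"
    then show "quasi_flat m M" unfolding quasi_flat_def by simp
  qed
  have iii: "quasi_flat m M \<longleftrightarrow>
            (\<forall>k\<ge>1. M \<inter> mpowX m k \<subseteq> {x + y | x y. x \<in> mpowY m k M \<and> y \<in> mpowX m (k + 1)})"
  proof
    assume q: "quasi_flat m M"
    show "\<forall>k\<ge>1. M \<inter> mpowX m k \<subseteq> {x + y | x y. x \<in> mpowY m k M \<and> y \<in> mpowX m (k + 1)}"
    proof (intro allI impI subsetI)
      fix k x assume k: "1 \<le> k" and x: "x \<in> M \<inter> mpowX m k"
      then have "x \<in> mpowY m k M" using q iv by blast
      moreover have "(0::'i \<Rightarrow> 'b) \<in> mpowX m (k + 1)" by (rule mX_zero)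
      ultimately show "x \<in> {x + y | x y. x \<in> mpowY m k M \<and> y \<in> mpowX m (k + 1)}"
        by (intro CollectI exI[of _ x] exI[of _ 0]) simp
    qed
  next
    assume "\<forall>k\<ge>1. M \<inter> mpowX m k \<subseteq> {x + y | x y. x \<in> mpowY m k M \<and> y \<in> mpowX m (k + 1)}"
    then show "quasi_flat m M" by (rule iii_qf)
  qed
  have cl: "quasi_flat m M \<Longrightarrow> madic_closed m M"
    using iv iv_closed by blast
  show ?thesis using iv iii cl by blast
qed

end
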